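(* There exists a universal constant $C>0$ such that the following holds. Let $n\ge1$, let $f:\mathbb{R}^n\to[0,\infty)$ be an isotropic, log-concave function, let $v>0$, and let $g=f*\gamma_n[v]$. Then for every $x\in\mathbb{R}^n$ with $|x|\le10\sqrt n$, $$|\nabla\log g(x)|\le C\sqrt n/v.$$
   Context: For $v>0$, $\gamma_n[v](x)=(2\pi v)^{-n/2}\exp(-|x|^2/(2v))$ on $\mathbb{R}^n$, and $*$ denotes convolution. A function $f:\mathbb{R}^n\to[0,\infty)$ is log-concave if $f(\lambda x+(1-\lambda)y)\ge f(x)^\lambda f(y)^{1-\lambda}$ for all $x,y$ and $0<\lambda<1$; it is isotropic if it is the probability density of a random vector with zero mean and identity covariance matrix. *)

theory Defs
  imports "HOL-Analysis.Analysis"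
begin

text \<open>Points of R^n are represented as extensional functions nat => real with
  domain {..<n}, i.e. elements of the space of the product measure below.\<close>

definition Rn :: "nat \<Rightarrow> (nat \<Rightarrow> real) set" where
  "Rn n = (\<Pi>\<^sub>E i\<in>{..<n}. (UNIV :: real set))"

definition lebesgue_Rn :: "nat \<Rightarrow> (nat \<Rightarrow> real) measure" where
  "lebesgue_Rn n = (\<Pi>\<^sub>M i\<in>{..<n}. lborel)"

definition enorm :: "nat \<Rightarrow> (nat \<Rightarrow> real) \<Rightarrow> real" where
  "enorm n x = sqrt (\<Sum>i<n. (x i)\<^sup>2)"

definition einner :: "nat \<Rightarrow> (nat \<Rightarrow> real) \<Rightarrow> (nat \<Rightarrow> real) \<Rightarrow> real" where
  "einner n x y = (\<Sum>i<n. x i * y i)"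

definition vminus :: "nat \<Rightarrow> (nat \<Rightarrow> real) \<Rightarrow> (nat \<Rightarrow> real) \<Rightarrow> (nat \<Rightarrow> real)" where
  "vminus n x y = restrict (\<lambda>i. x i - y i) {..<n}"

definition vcomb :: "nat \<Rightarrow> real \<Rightarrow> (nat \<Rightarrow> real) \<Rightarrow> (nat \<Rightarrow> real) \<Rightarrow> (nat \<Rightarrow> real)" where
  "vcomb n l x y = restrict (\<lambda>i. l * x i + (1 - l) * y i) {..<n}"

definition gaussian :: "nat \<Rightarrow> real \<Rightarrow> (nat \<Rightarrow> real) \<Rightarrow> real" where
  "gaussian n v x = (2 * pi * v) powr (- real n / 2) * exp (- (enorm n x)\<^sup>2 / (2 * v))"

definition convolution :: "nat \<Rightarrow> ((nat \<Rightarrow> real) \<Rightarrow> real) \<Rightarrow> ((nat \<Rightarrow> real) \<Rightarrow> real)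
    \<Rightarrow> (nat \<Rightarrow> real) \<Rightarrow> real" where
  "convolution n f h x = (\<integral>y. f y * h (vminus n x y) \<partial>lebesgue_Rn n)"

definition log_concave :: "nat \<Rightarrow> ((nat \<Rightarrow> real) \<Rightarrow> real) \<Rightarrow> bool" where
  "log_concave n f \<longleftrightarrow> (\<forall>x\<in>Rn n. f x \<ge> 0) \<and>
     (\<forall>x\<in>Rn n. \<forall>y\<in>Rn n. \<forall>l::real. 0 < l \<and> l < 1 \<longrightarrow>
        f (vcomb n l x y) \<ge> f x powr l * f y powr (1 - l))"

definition isotropic :: "nat \<Rightarrow> ((nat \<Rightarrow> real) \<Rightarrow> real) \<Rightarrow> bool" where
  "isotropic n f \<longleftrightarrow>
     f \<in> borel_measurable (lebesgue_Rn n) \<and> (\<forall>x\<in>Rn n. f x \<ge> 0) \<and>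
     integrable (lebesgue_Rn n) f \<and> (\<integral>x. f x \<partial>lebesgue_Rn n) = 1 \<and>
     (\<forall>i<n. integrable (lebesgue_Rn n) (\<lambda>x. x i * f x) \<and>
            (\<integral>x. x i * f x \<partial>lebesgue_Rn n) = 0) \<and>
     (\<forall>i<n. \<forall>j<n. integrable (lebesgue_Rn n) (\<lambda>x. x i * x j * f x) \<and>
            (\<integral>x. x i * x j * f x \<partial>lebesgue_Rn n) = (if i = j then 1 else 0))"

definition has_gradient :: "nat \<Rightarrow> ((nat \<Rightarrow> real) \<Rightarrow> real) \<Rightarrow> (nat \<Rightarrow> real)
    \<Rightarrow> (nat \<Rightarrow> real) \<Rightarrow> bool" where
  "has_gradient n phi G x \<longleftrightarrow>
     (\<forall>e>0. \<exists>d>0. \<forall>y\<in>Rn n. enorm n (vminus n y x) < d \<longrightarrow>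
        \<bar>phi y - phi x - einner n G (vminus n y x)\<bar> \<le> e * enorm n (vminus n y x))"

end

theory Submission
  imports Defs
begin

locale LC =
  fixes n :: nat and f :: "(nat \<Rightarrow> real) \<Rightarrow> real" and v :: real and x :: "nat \<Rightarrow> real"
  assumes iso: "isotropic n f" and vpos: "v > 0"
begin

abbreviation "M \<equiv> lebesgue_Rn n"

definition S :: "(nat \<Rightarrow> real) \<Rightarrow> (nat \<Rightarrow> real) \<Rightarrow> real" where
  "S a w = (\<Sum>i<n. (w i - a i)\<^sup>2)"
definition E :: "(nat \<Rightarrow> real) \<Rightarrow> (nat \<Rightarrow> real) \<Rightarrow> real" where
  "E a w = exp (- S a w / (2 * v))"

lemma spaceM: "space M = Rn n"
  by (simp add: lebesgue_Rn_def Rn_def space_PiM)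

lemma fmeas[measurable]: "f \<in> borel_measurable M"
  using iso by (simp add: isotropic_def)
lemma fint: "integrable M f"
  using iso by (simp add: isotropic_def)
lemma fnn: "w \<in> space M \<Longrightarrow> f w \<ge> 0"
  using iso by (simp add: isotropic_def spaceM)
lemma fone: "(\<integral>w. f w \<partial>M) = 1"
  using iso by (simp add: isotropic_def)
lemma f1int: "i < n \<Longrightarrow> integrable M (\<lambda>w. w i * f w)"
  using iso by (simp add: isotropic_def)
lemma f1: "i < n \<Longrightarrow> (\<integral>w. w i * f w \<partial>M) = 0"
  using iso by (simp add: isotropic_def)
lemma f2int: "i < n \<Longrightarrow> j < n \<Longrightarrow> integrable M (\<lambda>w. w i * w j * f w)"
  using iso by (simp add: isotropic_def)
lemma f2: "i < n \<Longrightarrow> (\<integral>w. w i * w i * f w \<partial>M) = 1"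
  using iso by (simp add: isotropic_def)

lemma comp_meas[measurable]: "i < n \<Longrightarrow> (\<lambda>w. w i) \<in> borel_measurable M"
  unfolding lebesgue_Rn_def using measurable_component_singleton[of i "{..<n}" "\<lambda>_. lborel"] by simp

lemma S_meas[measurable]: "S a \<in> borel_measurable M"
  unfolding S_def[abs_def] by (intro borel_measurable_sum) measurable

lemma E_meas[measurable]: "E a \<in> borel_measurable M"
  unfolding E_def[abs_def] by measurable

lemma E_pos: "E a w > 0" by (simp add: E_def)
lemma S_nn: "S a w \<ge> 0" by (simp add: S_def sum_nonneg)
lemma E_le1: "E a w \<le> 1"
  using S_nn[of a w] vpos by (simp add: E_def divide_nonneg_pos)

lemma E_abs: "\<bar>E a w\<bar> \<le> 1"
  using E_pos[of a w] E_le1[of a w] by linarith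

lemma int_bounded:
  fixes F g :: "(nat \<Rightarrow> real) \<Rightarrow> real"
  assumes "integrable M F" "g \<in> borel_measurable M" "\<And>w. \<bar>g w\<bar> \<le> 1"
  shows "integrable M (\<lambda>w. F w * g w)"
proof (rule Bochner_Integration.integrable_bound[OF assms(1)])
  show "(\<lambda>w. F w * g w) \<in> borel_measurable M" using assms borel_measurable_integrable by measurable
  show "AE w in M. norm (F w * g w) \<le> norm (F w)"
    using assms(3) by (auto simp: abs_mult intro!: mult_left_le)
qed

lemma quad_int: "i < n \<Longrightarrow> j < n \<Longrightarrow> integrable M (\<lambda>w. (w i - c) * (w j - d) * f w)"
proof -
  assume ij: "i < n" "j < n"
  have "integrable M (\<lambda>w. w i * w j * f w - d * (w i * f w) - c * (w j * f w) + c * d * f w)"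
    using f2int[OF ij] f1int ij fint by (intro Bochner_Integration.integrable_add Bochner_Integration.integrable_diff Bochner_Integration.integrable_mult_right) auto
  moreover have "(\<lambda>w. w i * w j * f w - d * (w i * f w) - c * (w j * f w) + c * d * f w) = (\<lambda>w. (w i - c) * (w j - d) * f w)"
    by (auto simp: algebra_simps)
  ultimately show ?thesis by simp
qed

lemma lin_int: "i < n \<Longrightarrow> integrable M (\<lambda>w. (w i - c) * f w)"
proof -
  assume i: "i < n"
  have "integrable M (\<lambda>w. w i * f w - c * f w)"
    using f1int[OF i] fint by (intro Bochner_Integration.integrable_diff Bochner_Integration.integrable_mult_right) auto
  moreover have "(\<lambda>w. w i * f w - c * f w) = (\<lambda>w. (w i - c) * f w)"
    by (auto simp: algebra_simps)
  ultimately show ?thesis by simp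
qed

lemma S_int: "integrable M (\<lambda>w. S a w * f w)"
proof -
  have "integrable M (\<lambda>w. \<Sum>i<n. (w i - a i) * (w i - a i) * f w)"
    by (intro Bochner_Integration.integrable_sum quad_int) auto
  moreover have "(\<lambda>w. \<Sum>i<n. (w i - a i) * (w i - a i) * f w) = (\<lambda>w. S a w * f w)"
    by (auto simp: S_def sum_distrib_right power2_eq_square)
  ultimately show ?thesis by simp
qed

lemma S_integral: "(\<integral>w. S a w * f w \<partial>M) = real n + (\<Sum>i<n. (a i)\<^sup>2)"
proof -
  have "(\<integral>w. S a w * f w \<partial>M) = (\<integral>w. (\<Sum>i<n. w i * w i * f w - 2 * a i * (w i * f w) + (a i)\<^sup>2 * f w) \<partial>M)"
    unfolding S_def sum_distrib_right
    by (intro Bochner_Integration.integral_cong sum.cong refl) (simp add: power2_eq_square algebra_simps)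
  also have "\<dots> = (\<Sum>i<n. (\<integral>w. w i * w i * f w - 2 * a i * (w i * f w) + (a i)\<^sup>2 * f w \<partial>M))"
    by (rule Bochner_Integration.integral_sum) (auto intro!: Bochner_Integration.integrable_add Bochner_Integration.integrable_diff Bochner_Integration.integrable_mult_right f2int f1int fint)
  also have "\<dots> = (\<Sum>i<n. 1 + (a i)\<^sup>2)"
  proof (intro sum.cong refl)
    fix i assume "i \<in> {..<n}"
    then have i: "i < n" by simp
    have "(\<integral>w. w i * w i * f w - 2 * a i * (w i * f w) + (a i)\<^sup>2 * f w \<partial>M)
       = (\<integral>w. w i * w i * f w \<partial>M) - 2 * a i * (\<integral>w. w i * f w \<partial>M) + (a i)\<^sup>2 * (\<integral>w. f w \<partial>M)"
      using f2int[OF i i] f1int[OF i] fint by simp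
    then show "(\<integral>w. w i * w i * f w - 2 * a i * (w i * f w) + (a i)\<^sup>2 * f w \<partial>M) = 1 + (a i)\<^sup>2"
      using f2[OF i] f1[OF i] fone by simp
  qed
  also have "\<dots> = real n + (\<Sum>i<n. (a i)\<^sup>2)" by (simp add: sum.distrib)
  finally show ?thesis .
qed


definition h :: "(nat \<Rightarrow> real) \<Rightarrow> real" where
  "h a = (\<integral>w. f w * E a w \<partial>M)"

lemma QE_int: assumes "integrable M (\<lambda>w. Q w * f w)"
  shows "integrable M (\<lambda>w. Q w * f w * E a w)"
  by (rule int_bounded[OF assms]) (auto intro: E_abs)

lemma fE_int: "integrable M (\<lambda>w. f w * E a w)"
  using QE_int[of "\<lambda>_. 1" a] fint by simp

lemma h_pos: "h a > 0"
proof -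
  have nn: "AE w in M. 0 \<le> f w * E a w"
    by (intro AE_I2 mult_nonneg_nonneg fnn less_imp_le[OF E_pos])
  have "h a \<ge> 0" unfolding h_def using nn by (rule integral_nonneg_AE)
  moreover have "h a \<noteq> 0"
  proof
    assume "h a = 0"
    then have "AE w in M. f w * E a w = 0"
      using integral_nonneg_eq_0_iff_AE[OF fE_int nn] by (simp add: h_def)
    then have "AE w in M. f w = 0" by eventually_elim (metis E_pos less_irrefl mult_eq_0_iff)
    then have "(\<integral>w. f w \<partial>M) = (\<integral>w. 0 \<partial>M)" by (rule integral_cong_AE[rotated 2]) auto
    then show False using fone by simp
  qed
  ultimately show ?thesis by simp
qed

definition mu :: "nat \<Rightarrow> real" where
  "mu i = (\<integral>w. (w i - x i) * f w * E x w \<partial>M) / h x"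

definition G :: "nat \<Rightarrow> real" where
  "G i = mu i / v"

lemma var_ineq: assumes i: "i < n"
  shows "(mu i)\<^sup>2 * h x \<le> (\<integral>w. ((w i - x i) * (w i - x i)) * f w * E x w \<partial>M)"
proof -
  define c where "c = mu i"
  have I2: "integrable M (\<lambda>w. ((w i - x i) * (w i - x i)) * f w * E x w)"
    by (rule QE_int) (use quad_int[OF i i] in simp)
  have I1: "integrable M (\<lambda>w. (w i - x i) * f w * E x w)"
    by (rule QE_int) (use lin_int[OF i] in simp)
  have m: "(\<integral>w. (w i - x i) * f w * E x w \<partial>M) = c * h x"
    using h_pos[of x] by (simp add: c_def mu_def)
  have "0 \<le> (\<integral>w. (w i - x i - c)\<^sup>2 * (f w * E x w) \<partial>M)"
    using fnn E_pos by (intro integral_nonneg_AE AE_I2 mult_nonneg_nonneg) (auto intro: less_imp_le)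
  also have "\<dots> = (\<integral>w. ((w i - x i) * (w i - x i)) * f w * E x w - 2 * c * ((w i - x i) * f w * E x w) + c\<^sup>2 * (f w * E x w) \<partial>M)"
    by (intro Bochner_Integration.integral_cong refl) (simp add: power2_eq_square algebra_simps)
  also have "\<dots> = (\<integral>w. ((w i - x i) * (w i - x i)) * f w * E x w \<partial>M) - 2 * c * (c * h x) + c\<^sup>2 * h x"
    using I1 I2 fE_int[of x] m by (simp add: h_def)
  finally show ?thesis by (simp add: c_def power2_eq_square algebra_simps)
qed

lemma cheb: "(\<integral>w. S x w * f w * E x w \<partial>M) \<le> (real n + (\<Sum>i<n. (x i)\<^sup>2)) * h x"
proof -
  define A where "A = (\<integral>w. S x w * f w \<partial>M)"
  define e where "e = exp (- A / (2 * v))"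
  have IS: "integrable M (\<lambda>w. S x w * f w * E x w)" by (rule QE_int[OF S_int])
  have "(\<integral>w. (S x w - A) * f w * (E x w - e) \<partial>M) \<le> (\<integral>w. 0 \<partial>M)"
  proof (rule integral_mono_AE)
    show "integrable M (\<lambda>w. (S x w - A) * f w * (E x w - e))"
    proof -
      have "integrable M (\<lambda>w. S x w * f w * E x w - A * (f w * E x w) - e * (S x w * f w) + e * A * f w)"
        using IS fE_int[of x] S_int[of x] fint
        by (intro Bochner_Integration.integrable_add Bochner_Integration.integrable_diff Bochner_Integration.integrable_mult_right) auto
      moreover have "(\<lambda>w. S x w * f w * E x w - A * (f w * E x w) - e * (S x w * f w) + e * A * f w) = (\<lambda>w. (S x w - A) * f w * (E x w - e))"
        by (auto simp: algebra_simps)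
      ultimately show ?thesis by simp
    qed
    show "AE w in M. (S x w - A) * f w * (E x w - e) \<le> 0"
    proof (rule AE_I2)
      fix w assume w: "w \<in> space M"
      have "(S x w - A) * (E x w - e) \<le> 0"
      proof (cases "S x w \<ge> A")
        case True
        then have "E x w \<le> e" unfolding E_def e_def using vpos by (simp add: divide_right_mono)
        then show ?thesis using True by (simp add: mult_nonneg_nonpos)
      next
        case False
        then have "E x w \<ge> e" unfolding E_def e_def using vpos by (simp add: divide_right_mono)
        then show ?thesis using False by (simp add: mult_nonpos_nonneg)
      qed
      then show "(S x w - A) * f w * (E x w - e) \<le> 0"
        using fnn[OF w] by (metis mult.commute mult.left_commute mult_nonneg_nonpos)
    qed
  qed simp
  moreover have "(\<integral>w. (S x w - A) * f w * (E x w - e) \<partial>M) =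
     (\<integral>w. S x w * f w * E x w - A * (f w * E x w) - e * (S x w * f w) + e * A * f w \<partial>M)"
    by (intro Bochner_Integration.integral_cong refl) (simp add: algebra_simps)
  moreover have "\<dots> = (\<integral>w. S x w * f w * E x w \<partial>M) - A * h x - e * A + e * A"
    using IS fE_int[of x] S_int[of x] fint fone by (simp add: h_def A_def)
  ultimately have "(\<integral>w. S x w * f w * E x w \<partial>M) \<le> A * h x" by simp
  then show ?thesis using S_integral[of x] by (simp add: A_def)
qed

lemma mu_sq: "(\<Sum>i<n. (mu i)\<^sup>2) \<le> real n + (\<Sum>i<n. (x i)\<^sup>2)"
proof -
  have "(\<Sum>i<n. (mu i)\<^sup>2) * h x = (\<Sum>i<n. (mu i)\<^sup>2 * h x)" by (simp add: sum_distrib_right)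
  also have "\<dots> \<le> (\<Sum>i<n. (\<integral>w. ((w i - x i) * (w i - x i)) * f w * E x w \<partial>M))"
    by (intro sum_mono var_ineq) simp
  also have "\<dots> = (\<integral>w. (\<Sum>i<n. ((w i - x i) * (w i - x i)) * f w * E x w) \<partial>M)"
    by (rule Bochner_Integration.integral_sum[symmetric]) (auto intro!: QE_int quad_int)
  also have "\<dots> = (\<integral>w. S x w * f w * E x w \<partial>M)"
    by (intro Bochner_Integration.integral_cong refl) (simp add: S_def sum_distrib_right power2_eq_square)
  also have "\<dots> \<le> (real n + (\<Sum>i<n. (x i)\<^sup>2)) * h x" by (rule cheb)
  finally show ?thesis using h_pos[of x] by simp
qed


end

lemma exp_quad: "exp (s::real) \<le> 1 + s + s\<^sup>2 / 2 + s\<^sup>2 * exp s / 2"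
proof (cases "s \<ge> 0")
  case True
  obtain t where t: "\<bar>t\<bar> \<le> \<bar>s\<bar>" "exp s = (\<Sum>m<2. (s ^ m) / fact m) + (exp t / fact 2) * s ^ 2"
    using Maclaurin_exp_le[of s 2] by blast
  have "exp t \<le> exp s" using t(1) True by simp
  then have "exp t * s\<^sup>2 \<le> exp s * s\<^sup>2" by (simp add: mult_right_mono)
  moreover have "exp s = 1 + s + exp t * s\<^sup>2 / 2"
    using t(2) by (simp add: numeral_2_eq_2)
  moreover have "0 \<le> s\<^sup>2 / 2" by simp
  moreover have "s\<^sup>2 * exp s / 2 = exp s * s\<^sup>2 / 2" by simp
  ultimately show ?thesis by linarith
next
  case False
  obtain t where t: "\<bar>t\<bar> \<le> \<bar>s\<bar>" "exp s = (\<Sum>m<3. (s ^ m) / fact m) + (exp t / fact 3) * s ^ 3"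
    using Maclaurin_exp_le[of s 3] by blast
  have "s ^ 3 \<le> 0" using False by (simp add: power_le_zero_eq_numeral)
  then have "exp t / fact 3 * s ^ 3 \<le> 0" by (intro mult_nonneg_nonpos) auto
  moreover have "(\<Sum>m<3. (s ^ m) / fact m) = 1 + s + s\<^sup>2 / 2"
    by (simp add: numeral_3_eq_3 numeral_2_eq_2 lessThan_Suc fact_numeral)
  moreover have "0 \<le> s\<^sup>2 * exp s / 2" by simp
  ultimately show ?thesis using t(2) by linarith
qed

context LC begin

definition B :: real where
  "B = (\<integral>w. (\<Sum>i<n. (w i - x i - mu i)\<^sup>2) * f w \<partial>M)"

lemma T_int: "integrable M (\<lambda>w. (\<Sum>i<n. (w i - x i - mu i)\<^sup>2) * f w)"
proof -
  have "integrable M (\<lambda>w. \<Sum>i<n. (w i - (x i + mu i)) * (w i - (x i + mu i)) * f w)"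
    by (intro Bochner_Integration.integrable_sum quad_int) auto
  moreover have "(\<lambda>w. \<Sum>i<n. (w i - (x i + mu i)) * (w i - (x i + mu i)) * f w) = (\<lambda>w. (\<Sum>i<n. (w i - x i - mu i)\<^sup>2) * f w)"
    by (rule ext, unfold sum_distrib_right, rule sum.cong, simp, simp add: power2_eq_square algebra_simps)
  ultimately show ?thesis by simp
qed

lemma B_nn: "B \<ge> 0"
  unfolding B_def using fnn by (intro integral_nonneg_AE AE_I2 mult_nonneg_nonneg sum_nonneg) auto

lemma main_err:
  fixes z :: "nat \<Rightarrow> real"
  defines "d \<equiv> \<lambda>i. z i - x i"
  defines "D \<equiv> (\<Sum>i<n. (d i)\<^sup>2)"
  assumes D1: "D \<le> 1"
  shows "\<bar>ln (h z) - ln (h x) - (\<Sum>i<n. G i * d i)\<bar> \<le>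
     (1 / (2 * v) + (1 + exp ((2 + (\<Sum>i<n. (mu i)\<^sup>2)) / (2 * v))) * B / (2 * v\<^sup>2 * h x)) * D"
proof -
  define L where "L w = (\<Sum>i<n. d i * (w i - x i))" for w
  define phi where "phi w = L w / v - D / (2 * v)" for w
  define a where "a = (\<Sum>i<n. d i * mu i) / v - D / (2 * v)"
  define sf where "sf w = phi w - a" for w
  define T where "T w = (\<Sum>i<n. (w i - x i - mu i)\<^sup>2)" for w
  have hx: "h x > 0" by (rule h_pos)
  have Ez: "E z w = E x w * exp (phi w)" for w
  proof -
    have "S z w = (\<Sum>i<n. (w i - x i)\<^sup>2 - 2 * (d i * (w i - x i)) + (d i)\<^sup>2)"
      unfolding S_def d_def by (intro sum.cong refl) (simp add: power2_eq_square algebra_simps)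
    also have "\<dots> = S x w - 2 * L w + D"
      by (simp add: S_def L_def D_def sum.distrib sum_subtractf sum_distrib_left)
    finally have Sz: "S z w = S x w - 2 * L w + D" .
    have "- S z w / (2 * v) = - S x w / (2 * v) + phi w"
      unfolding Sz phi_def using vpos by (simp add: field_simps)
    then show ?thesis unfolding E_def by (metis exp_add)
  qed
  have sf_eq: "sf w = (\<Sum>i<n. d i * (w i - x i - mu i)) / v" for w
    by (simp add: sf_def phi_def a_def L_def sum_subtractf algebra_simps diff_divide_distrib sum.distrib add_divide_distrib)
  have sf_sq: "(sf w)\<^sup>2 \<le> D * T w / v\<^sup>2" for w
    using Cauchy_Schwarz_ineq_sum[of d "\<lambda>i. w i - x i - mu i" "{..<n}"]
    by (simp add: sf_eq D_def T_def power_divide divide_right_mono)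
  have LI: "integrable M (\<lambda>w. L w * f w * E x w)"
  proof (rule QE_int)
    have "integrable M (\<lambda>w. \<Sum>i<n. d i * ((w i - x i) * f w))"
      by (intro Bochner_Integration.integrable_sum Bochner_Integration.integrable_mult_right lin_int) auto
    then show "integrable M (\<lambda>w. L w * f w)" by (simp add: L_def sum_distrib_right mult.assoc)
  qed
  have Lint: "(\<integral>w. L w * f w * E x w \<partial>M) = (\<Sum>i<n. d i * mu i) * h x"
  proof -
    have "(\<integral>w. L w * f w * E x w \<partial>M) = (\<integral>w. (\<Sum>i<n. d i * ((w i - x i) * f w * E x w)) \<partial>M)"
      by (intro Bochner_Integration.integral_cong refl) (simp add: L_def sum_distrib_right mult.assoc)
    also have "\<dots> = (\<Sum>i<n. d i * (\<integral>w. (w i - x i) * f w * E x w \<partial>M))"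
      by (subst Bochner_Integration.integral_sum) (auto intro!: Bochner_Integration.integrable_mult_right QE_int lin_int)
    also have "\<dots> = (\<Sum>i<n. d i * mu i) * h x"
      using hx by (simp add: mu_def sum_distrib_right)
    finally show ?thesis .
  qed
  have PI: "integrable M (\<lambda>w. phi w * (f w * E x w))"
  proof -
    have "integrable M (\<lambda>w. (1 / v) * (L w * f w * E x w) - (D / (2 * v)) * (f w * E x w))"
      using LI fE_int[of x] by (intro Bochner_Integration.integrable_diff Bochner_Integration.integrable_mult_right) auto
    moreover have "(\<lambda>w. (1 / v) * (L w * f w * E x w) - (D / (2 * v)) * (f w * E x w)) = (\<lambda>w. phi w * (f w * E x w))"
      by (auto simp: phi_def algebra_simps diff_divide_distrib)
    ultimately show ?thesis by simp
  qed
  have Pint: "(\<integral>w. phi w * (f w * E x w) \<partial>M) = a * h x"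
  proof -
    have "(\<integral>w. phi w * (f w * E x w) \<partial>M) = (\<integral>w. (1 / v) * (L w * f w * E x w) - (D / (2 * v)) * (f w * E x w) \<partial>M)"
      by (intro Bochner_Integration.integral_cong refl) (simp add: phi_def algebra_simps diff_divide_distrib)
    also have "\<dots> = (1 / v) * ((\<Sum>i<n. d i * mu i) * h x) - (D / (2 * v)) * h x"
      using LI fE_int[of x] Lint by (simp add: h_def)
    finally show ?thesis by (simp add: a_def algebra_simps diff_divide_distrib)
  qed
  have hz: "h z = (\<integral>w. exp (phi w) * (f w * E x w) \<partial>M)"
    unfolding h_def by (intro Bochner_Integration.integral_cong refl) (simp add: Ez)
  have EI: "integrable M (\<lambda>w. exp (phi w) * (f w * E x w))"
    using fE_int[of z] by (simp add: Ez mult_ac)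
  have low: "exp a * h x \<le> h z"
  proof -
    have "(\<integral>w. exp a * (f w * E x w) + exp a * (phi w * (f w * E x w)) - exp a * a * (f w * E x w) \<partial>M)
        \<le> (\<integral>w. exp (phi w) * (f w * E x w) \<partial>M)"
    proof (rule integral_mono_AE)
      show "integrable M (\<lambda>w. exp a * (f w * E x w) + exp a * (phi w * (f w * E x w)) - exp a * a * (f w * E x w))"
        using fE_int[of x] PI by (intro Bochner_Integration.integrable_add Bochner_Integration.integrable_diff Bochner_Integration.integrable_mult_right) auto
      show "integrable M (\<lambda>w. exp (phi w) * (f w * E x w))" by (rule EI)
      show "AE w in M. exp a * (f w * E x w) + exp a * (phi w * (f w * E x w)) - exp a * a * (f w * E x w) \<le> exp (phi w) * (f w * E x w)"
      proof (rule AE_I2)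
        fix w assume w: "w \<in> space M"
        have "exp a * (1 + (phi w - a)) \<le> exp a * exp (phi w - a)"
          by (intro mult_left_mono exp_ge_add_one_self) auto
        also have "\<dots> = exp (phi w)" by (simp add: exp_diff)
        finally have "(exp a * (1 + (phi w - a))) * (f w * E x w) \<le> exp (phi w) * (f w * E x w)"
          using fnn[OF w] E_pos[of x w] by (intro mult_right_mono) auto
        then show "exp a * (f w * E x w) + exp a * (phi w * (f w * E x w)) - exp a * a * (f w * E x w) \<le> exp (phi w) * (f w * E x w)"
          by (simp add: algebra_simps)
      qed
    qed
    also have "\<dots> = h z" by (simp add: hz)
    finally show ?thesis using fE_int[of x] PI Pint by (simp add: h_def algebra_simps)
  qed
  define K where "K = D / v\<^sup>2"
  have up: "h z \<le> exp a * h x + (exp a + 1) / 2 * K * B"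
  proof -
    have "(\<integral>w. exp (phi w) * (f w * E x w) \<partial>M)
       \<le> (\<integral>w. exp a * (f w * E x w) + exp a * (phi w * (f w * E x w)) - exp a * a * (f w * E x w) + ((exp a + 1) / 2 * K) * (T w * f w) \<partial>M)"
    proof (rule integral_mono_AE)
      show "integrable M (\<lambda>w. exp a * (f w * E x w) + exp a * (phi w * (f w * E x w)) - exp a * a * (f w * E x w) + ((exp a + 1) / 2 * K) * (T w * f w))"
        using fE_int[of x] PI T_int by (intro Bochner_Integration.integrable_add Bochner_Integration.integrable_diff Bochner_Integration.integrable_mult_right) (auto simp: T_def)
      show "integrable M (\<lambda>w. exp (phi w) * (f w * E x w))" by (rule EI)
      show "AE w in M. exp (phi w) * (f w * E x w) \<le> exp a * (f w * E x w) + exp a * (phi w * (f w * E x w)) - exp a * a * (f w * E x w) + ((exp a + 1) / 2 * K) * (T w * f w)"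
      proof (rule AE_I2)
        fix w assume w: "w \<in> space M"
        define s where "s = sf w"
        have f0: "f w \<ge> 0" by (rule fnn[OF w])
        have e0: "0 < E x w" "E x w \<le> 1" "0 < E z w" "E z w \<le> 1" using E_pos E_le1 by auto
        have ss: "s\<^sup>2 \<le> K * T w" using sf_sq[of w] by (simp add: s_def K_def)
        have ephi: "exp (phi w) = exp a * exp s" by (simp add: s_def sf_def flip: exp_add)
        have "exp (phi w) * (f w * E x w) \<le> exp a * (1 + s + s\<^sup>2 / 2 + s\<^sup>2 * exp s / 2) * (f w * E x w)"
          unfolding ephi using f0 e0 exp_quad[of s] by (intro mult_right_mono mult_left_mono) auto
        also have "\<dots> = exp a * (f w * E x w) + exp a * (s * (f w * E x w)) + exp a / 2 * (s\<^sup>2 * (f w * E x w)) + 1 / 2 * (s\<^sup>2 * (f w * E z w))"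
          by (simp add: Ez ephi algebra_simps)
        also have "\<dots> \<le> exp a * (f w * E x w) + exp a * (s * (f w * E x w)) + exp a / 2 * (K * T w * f w) + 1 / 2 * (K * T w * f w)"
        proof -
          have A1: "s\<^sup>2 * (f w * E x w) \<le> K * T w * f w"
            using ss f0 e0 by (metis mult.assoc mult_left_le mult_mono' mult_nonneg_nonneg zero_le_power2 less_imp_le)
          have A2: "s\<^sup>2 * (f w * E z w) \<le> K * T w * f w"
            using ss f0 e0 by (metis mult.assoc mult_left_le mult_mono' mult_nonneg_nonneg zero_le_power2 less_imp_le)
          have "exp a / 2 * (s\<^sup>2 * (f w * E x w)) \<le> exp a / 2 * (K * T w * f w)"
            "1 / 2 * (s\<^sup>2 * (f w * E z w)) \<le> 1 / 2 * (K * T w * f w)"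
            using A1 A2 by (intro mult_left_mono; simp)+
          then show ?thesis by linarith
        qed
        also have "\<dots> = exp a * (f w * E x w) + exp a * (phi w * (f w * E x w)) - exp a * a * (f w * E x w) + ((exp a + 1) / 2 * K) * (T w * f w)"
          by (simp add: s_def sf_def algebra_simps)
        finally show "exp (phi w) * (f w * E x w) \<le> exp a * (f w * E x w) + exp a * (phi w * (f w * E x w)) - exp a * a * (f w * E x w) + ((exp a + 1) / 2 * K) * (T w * f w)" .
      qed
    qed
    also have "\<dots> = exp a * h x + (exp a + 1) / 2 * K * B"
      using fE_int[of x] PI Pint T_int by (simp add: h_def B_def T_def algebra_simps)
    finally show ?thesis by (simp add: hz)
  qed
  define R where "R = h z / h x"
  define q where "q = (1 + exp (- a)) * K * B / (2 * h x)"
  have hz0: "h z > 0" by (rule h_pos)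
  have R0: "R > 0" using hx hz0 by (simp add: R_def)
  have lnR: "ln (h z) - ln (h x) = ln R" using hx hz0 by (simp add: R_def ln_div)
  have "exp a \<le> R" using low hx by (simp add: R_def pos_le_divide_eq)
  then have lo: "a \<le> ln R" using R0 by (metis ln_exp ln_le_cancel_iff exp_gt_zero)
  have q0: "q \<ge> 0" using B_nn hx vpos by (simp add: q_def K_def D_def sum_nonneg)
  have "R \<le> (exp a * h x + (exp a + 1) / 2 * K * B) / h x"
    unfolding R_def by (rule divide_right_mono[OF up]) (use hx in simp)
  also have "\<dots> = exp a + (exp a + 1) / 2 * K * B / h x" using hx by (simp add: add_divide_distrib)
  also have "\<dots> = exp a * (1 + q)"
    using hx by (simp add: q_def field_simps exp_minus)
  finally have "ln R \<le> ln (exp a * (1 + q))" using R0 by simp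
  also have "\<dots> = a + ln (1 + q)" using q0 by (simp add: ln_mult)
  also have "\<dots> \<le> a + q" using ln_add_one_self_le_self[OF q0] by simp
  finally have hi: "ln R \<le> a + q" .
  have Gd: "(\<Sum>i<n. G i * d i) = a + D / (2 * v)"
    by (simp add: a_def G_def sum_divide_distrib[symmetric] mult.commute)
  have "- (\<Sum>i<n. d i * mu i) \<le> (\<Sum>i<n. ((d i)\<^sup>2 + (mu i)\<^sup>2) / 2)"
    unfolding sum_negf[symmetric]
  proof (rule sum_mono)
    fix i show "- (d i * mu i) \<le> ((d i)\<^sup>2 + (mu i)\<^sup>2) / 2"
      using zero_le_power2[of "d i + mu i"] by (simp add: power2_eq_square algebra_simps)
  qed
  also have "\<dots> = (D + (\<Sum>i<n. (mu i)\<^sup>2)) / 2"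
    by (simp add: D_def sum.distrib sum_divide_distrib[symmetric])
  finally have "- 2 * (\<Sum>i<n. d i * mu i) \<le> D + (\<Sum>i<n. (mu i)\<^sup>2)" by (simp add: field_simps)
  then have P1: "D - 2 * (\<Sum>i<n. d i * mu i) \<le> 2 + (\<Sum>i<n. (mu i)\<^sup>2)" using D1 by linarith
  have "- a = (D - 2 * (\<Sum>i<n. d i * mu i)) / (2 * v)" using vpos by (simp add: a_def field_simps)
  also have "\<dots> \<le> (2 + (\<Sum>i<n. (mu i)\<^sup>2)) / (2 * v)" using P1 vpos by (intro divide_right_mono) auto
  finally have "- a \<le> (2 + (\<Sum>i<n. (mu i)\<^sup>2)) / (2 * v)" .
  then have ea: "exp (- a) \<le> exp ((2 + (\<Sum>i<n. (mu i)\<^sup>2)) / (2 * v))" by simp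
  have "q \<le> (1 + exp ((2 + (\<Sum>i<n. (mu i)\<^sup>2)) / (2 * v))) * B / (2 * v\<^sup>2 * h x) * D"
  proof -
    have "q = (1 + exp (- a)) * (B / (2 * v\<^sup>2 * h x) * D)" using vpos hx by (simp add: q_def K_def field_simps)
    also have "\<dots> \<le> (1 + exp ((2 + (\<Sum>i<n. (mu i)\<^sup>2)) / (2 * v))) * (B / (2 * v\<^sup>2 * h x) * D)"
      using ea B_nn hx vpos by (intro mult_right_mono) (auto simp: D_def sum_nonneg)
    finally show ?thesis by simp
  qed
  moreover have "D \<ge> 0" by (simp add: D_def sum_nonneg)
  ultimately show ?thesis using lo hi lnR Gd vpos
    by (simp add: abs_le_iff algebra_simps add_divide_distrib) (smt (verit) divide_nonneg_pos)
qed


lemma conv_eq: "convolution n f (gaussian n v) a = (2 * pi * v) powr (- real n / 2) * h a"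
proof -
  have "(enorm n (vminus n a w))\<^sup>2 = S a w" for w
    by (simp add: enorm_def vminus_def S_def sum_nonneg power2_commute)
  then have "convolution n f (gaussian n v) a = (\<integral>w. (2 * pi * v) powr (- real n / 2) * (f w * E a w) \<partial>M)"
    unfolding convolution_def gaussian_def E_def by (intro Bochner_Integration.integral_cong refl) (simp add: mult_ac)
  then show ?thesis by (simp add: h_def)
qed

lemma grad_part: "has_gradient n (\<lambda>y. ln (convolution n f (gaussian n v) y)) G x"
  unfolding has_gradient_def
proof (intro allI impI)
  fix e :: real assume e: "e > 0"
  define K where "K = 1 / (2 * v) + (1 + exp ((2 + (\<Sum>i<n. (mu i)\<^sup>2)) / (2 * v))) * B / (2 * v\<^sup>2 * h x)"
  have K0: "K \<ge> 0" using vpos B_nn h_pos[of x] by (simp add: K_def)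
  define del where "del = min 1 (e / (K + 1))"
  have del0: "del > 0" using e K0 by (simp add: del_def)
  show "\<exists>d>0. \<forall>y\<in>Rn n. enorm n (vminus n y x) < d \<longrightarrow>
        \<bar>ln (convolution n f (gaussian n v) y) - ln (convolution n f (gaussian n v) x) - einner n G (vminus n y x)\<bar>
        \<le> e * enorm n (vminus n y x)"
  proof (intro exI[of _ del] conjI ballI impI del0)
    fix z assume z: "z \<in> Rn n" and zl: "enorm n (vminus n z x) < del"
    define D where "D = (\<Sum>i<n. (z i - x i)\<^sup>2)"
    have D0: "D \<ge> 0" by (simp add: D_def sum_nonneg)
    have en: "enorm n (vminus n z x) = sqrt D" by (simp add: enorm_def vminus_def D_def)
    have ein: "einner n G (vminus n z x) = (\<Sum>i<n. G i * (z i - x i))" by (simp add: einner_def vminus_def)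
    have c0: "(2 * pi * v) powr (- real n / 2) > 0" using vpos by simp
    have lnc: "ln (convolution n f (gaussian n v) z) - ln (convolution n f (gaussian n v) x) = ln (h z) - ln (h x)"
      using c0 h_pos[of z] h_pos[of x] by (simp add: conv_eq ln_mult)
    have sD: "sqrt D < del" using zl en by simp
    have "sqrt D \<le> 1" using sD by (simp add: del_def)
    then have D1: "D \<le> 1" by (metis real_sqrt_le_iff real_sqrt_one)
    have err: "\<bar>ln (h z) - ln (h x) - (\<Sum>i<n. G i * (z i - x i))\<bar> \<le> K * D"
      using main_err[of z] D1 by (simp add: D_def K_def)
    have "K * D = K * sqrt D * sqrt D" using D0 by (simp add: mult.assoc)
    also have "\<dots> \<le> K * del * sqrt D" using K0 sD D0 by (intro mult_right_mono mult_left_mono) auto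
    also have "\<dots> \<le> e * sqrt D"
    proof (intro mult_right_mono)
      have "K * del \<le> K * (e / (K + 1))" using K0 by (intro mult_left_mono) (auto simp: del_def)
      also have "\<dots> \<le> e" using K0 e by (simp add: field_simps)
      finally show "K * del \<le> e" .
    qed (use D0 in simp)
    finally show "\<bar>ln (convolution n f (gaussian n v) z) - ln (convolution n f (gaussian n v) x) - einner n G (vminus n z x)\<bar>
        \<le> e * enorm n (vminus n z x)"
      using err lnc ein en by simp
  qed
qed

lemma norm_part: assumes "enorm n x \<le> 10 * sqrt (real n)"
  shows "enorm n G \<le> 11 * sqrt (real n) / v"
proof -
  have "sqrt (\<Sum>i<n. (x i)\<^sup>2) \<le> sqrt (100 * real n)" using assms by (simp add: enorm_def real_sqrt_mult)
  then have x2: "(\<Sum>i<n. (x i)\<^sup>2) \<le> 100 * real n" by simp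
  have "(\<Sum>i<n. (G i)\<^sup>2) = (\<Sum>i<n. (mu i)\<^sup>2) / v\<^sup>2"
    by (simp add: G_def power_divide sum_divide_distrib)
  then have "enorm n G = sqrt (\<Sum>i<n. (mu i)\<^sup>2) / v"
    using vpos by (simp add: enorm_def real_sqrt_divide)
  also have "\<dots> \<le> sqrt (121 * real n) / v"
    using mu_sq x2 vpos by (intro divide_right_mono) auto
  also have "\<dots> = 11 * sqrt (real n) / v" by (simp add: real_sqrt_mult)
  finally show ?thesis .
qed

end

theorem lemma2p7:
  shows "\<exists>C>0. \<forall>n::nat. \<forall>f v. n \<ge> 1 \<longrightarrow> log_concave n f \<longrightarrow> isotropic n f \<longrightarrow> v > 0 \<longrightarrow>
     (\<forall>x\<in>Rn n. enorm n x \<le> 10 * sqrt (real n) \<longrightarrow>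
        (\<exists>G. has_gradient n (\<lambda>y. ln (convolution n f (gaussian n v) y)) G x \<and>
             enorm n G \<le> C * sqrt (real n) / v))"
proof (intro exI[of _ 11] conjI allI impI ballI)
  fix n :: nat and f and v :: real and x
  assume "isotropic n f" "v > 0" "enorm n x \<le> 10 * sqrt (real n)"
  then interpret LC n f v x by unfold_locales
  show "\<exists>G. has_gradient n (\<lambda>y. ln (convolution n f (gaussian n v) y)) G x \<and>
             enorm n G \<le> 11 * sqrt (real n) / v"
    using grad_part norm_part \<open>enorm n x \<le> 10 * sqrt (real n)\<close> by blast
qed simp

end
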